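(* Let $(a',b',c',d')\in\mathbb{Z}_{\ge0}^4$. There exists a unique $(a,b,c,d)\in\mathbb{Z}_{\ge0}^4$ such that $0\le b\le1$, $0\le c\le q_0-1$, $0\le d\le q_0-1$ and $\lVert(a,b,c,d)\rVert=\lVert(a',b',c',d')\rVert$.
   Context: $n\ge2$ is an integer, $q_0=2^n$, $q=2q_0^2$, and for $(a,b,c,d)\in\mathbb{Z}_{\ge0}^4$ one sets $\lVert(a,b,c,d)\rVert:=aq+b(q+q_0)+c(q+2q_0)+d(q+2q_0+1)$. *)

theory Defs
  imports Main
begin

definition q0 :: "nat \<Rightarrow> nat" where
  "q0 n = 2 ^ n"

definition qq :: "nat \<Rightarrow> nat" where
  "qq n = 2 * (q0 n)^2"

definition wnorm :: "nat \<Rightarrow> nat \<times> nat \<times> nat \<times> nat \<Rightarrow> nat" where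
  "wnorm n t = (case t of (a, b, c, d) \<Rightarrow>
     a * qq n + b * (qq n + q0 n) + c * (qq n + 2 * q0 n) + d * (qq n + 2 * q0 n + 1))"

end

theory Submission
  imports Defs
begin

lemma wexp: "wnorm n (a,b,c,d) = d + q0 n * (b + 2*c + 2*d + 2 * q0 n * (a+b+c+d))"
  unfolding wnorm_def qq_def by (simp add: algebra_simps power2_eq_square)

lemma divmod_uniq:
  fixes Q x1 x2 y1 y2 :: nat
  assumes "x1 < Q" "x2 < Q" "x1 + Q*y1 = x2 + Q*y2"
  shows "x1 = x2 \<and> y1 = y2"
proof -
  have "(x1 + Q*y1) mod Q = x1" using assms(1) by simp
  moreover have "(x2 + Q*y2) mod Q = x2" using assms(2) by simp
  ultimately have e: "x1 = x2" using assms(3) by metis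
  have "Q > 0" using assms(1) by simp
  with e assms(3) show ?thesis by simp
qed

theorem lemma3p6:
  fixes n :: nat and a' b' c' d' :: nat
  assumes "n \<ge> 2"
  shows "\<exists>!(a, b, c, d). b \<le> 1 \<and> c \<le> q0 n - 1 \<and> d \<le> q0 n - 1 \<and>
           wnorm n (a, b, c, d) = wnorm n (a', b', c', d')"
proof -
  define Q where "Q = q0 n"
  have Qp: "Q > 0" unfolding Q_def q0_def by simp
  have W: "\<And>a b c d. wnorm n (a,b,c,d) = d + Q * (b + 2*c + 2*d + 2 * Q * (a+b+c+d))"
    unfolding Q_def by (rule wexp)
  obtain k1 d where d1: "d' = Q*k1 + d" "d < Q"
    using Qp by (metis mod_less_divisor mult_div_mod_eq)
  obtain k2 b where b1: "b' + k1 = 2*k2 + b" "b < 2"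
    by (metis mod_less_divisor mult_div_mod_eq zero_less_numeral)
  obtain k3 c where c1: "c' + k2 = Q*k3 + c" "c < Q"
    using Qp by (metis mod_less_divisor mult_div_mod_eq)
  define a where "a = a' + Q*k1 + k2 + (Q+1)*k3"
  have ex: "wnorm n (a,b,c,d) = wnorm n (a',b',c',d')"
  proof -
    have hb: "int b' = 2*int k2 + int b - int k1" using b1 by linarith
    have hc: "int c' = int Q * int k3 + int c - int k2" using c1
      by (metis add_diff_cancel_right' of_nat_add of_nat_mult)
    have hd: "int d' = int Q * int k1 + int d" using d1 by simp
    have "int (wnorm n (a,b,c,d)) = int (wnorm n (a',b',c',d'))"
      unfolding W a_def of_nat_add of_nat_mult
      by (simp only: hb hc hd) (simp add: algebra_simps)
    thus ?thesis by simp
  qed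
  show ?thesis
  proof (rule ex1I[of _ "(a,b,c,d)"])
    show "case (a,b,c,d) of (a, b, c, d) \<Rightarrow> b \<le> 1 \<and> c \<le> q0 n - 1 \<and> d \<le> q0 n - 1 \<and>
           wnorm n (a, b, c, d) = wnorm n (a', b', c', d')"
      using ex b1 c1 d1 Q_def by auto
  next
    fix t assume "case t of (a, b, c, d) \<Rightarrow> b \<le> 1 \<and> c \<le> q0 n - 1 \<and> d \<le> q0 n - 1 \<and>
           wnorm n (a, b, c, d) = wnorm n (a', b', c', d')"
    then obtain a2 b2 c2 d2 where t: "t = (a2,b2,c2,d2)" "b2 \<le> 1" "c2 < Q" "d2 < Q"
       "wnorm n (a2,b2,c2,d2) = wnorm n (a,b,c,d)"
      using ex Qp unfolding Q_def by (cases t) auto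
    have e1: "d2 + Q * (b2 + 2*c2 + 2*d2 + 2 * Q * (a2+b2+c2+d2)) =
              d + Q * (b + 2*c + 2*d + 2 * Q * (a+b+c+d))" using t(5) W by simp
    from divmod_uniq[OF t(4) d1(2) e1] have dd: "d2 = d"
      and e2: "b2 + 2*c2 + 2*d2 + 2 * Q * (a2+b2+c2+d2) = b + 2*c + 2*d + 2 * Q * (a+b+c+d)"
      by auto
    have e3: "(b2 + 2*c2) + (2*Q) * (a2+b2+c2+d2) = (b + 2*c) + (2*Q) * (a+b+c+d)"
      using e2 dd by (simp add: algebra_simps)
    have "b2 + 2*c2 < 2*Q" "b + 2*c < 2*Q" using t b1 c1 by auto
    from divmod_uniq[OF this e3] have e4: "b2 + 2*c2 = b + 2*c" "a2+b2+c2+d2 = a+b+c+d" by auto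
    have "b2 = b" using e4(1) t(2) b1(2) by presburger
    with e4 dd show "t = (a,b,c,d)" using t(1) by simp
  qed
qed

end
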